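(* Let $\mathfrak{A}$ be a $(\circ,\wedge,\mathsf{A})$-algebra that is representable by partial functions and atomic. Let $\varphi$ be the first-order sentence asserting: for all $a,b,c$, if $a\circ x\le c$ for every atom $x$ with $x\le b$, then $a\circ b\le c$. Then composition in $\mathfrak{A}$ is completely left-distributive over joins if and only if $\mathfrak{A}\models\varphi$.
   Context: A $(\circ,\wedge,\mathsf{A})$-algebra is a set with two binary operations $\circ,\wedge$ and one unary operation $\mathsf{A}$. An algebra of partial functions of this signature is a set of partial functions, with base $X$ the union of all their domains and ranges, closed under: composition $f\circ g=\{(x,z)\mid \exists y\,(x,y)\in f,(y,z)\in g\}$; intersection; antidomain $\mathsf{A}(f)=\{(x,x)\mid x\in X, x\notin\mathrm{dom}(f)\}$. A representation by partial functions is an isomorphism onto such an algebra. The order is $a\le b\iff a\wedge b=a$, with least element $0=\mathsf{A}(a)\circ a$. An atom is a minimal nonzero element; $\mathfrak{A}$ is atomic if every nonzero element is above an atom. Composition is completely left-distributive over joins if for every $a\in\mathfrak{A}$ and every $S\subseteq\mathfrak{A}$ such that $\bigvee S$ exists, $\bigvee\{a\circ s\mid s\in S\}$ exists and equals $a\circ\bigvee S$. *)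

theory Defs
  imports Main
begin

definition base_of :: "('a \<Rightarrow> ('b \<times> 'b) set) \<Rightarrow> 'b set" where
  "base_of h = (\<Union>a. Domain (h a) \<union> Range (h a))"

definition pf_antidomain :: "'b set \<Rightarrow> ('b \<times> 'b) set \<Rightarrow> ('b \<times> 'b) set" where
  "pf_antidomain X f = {(x, x) | x. x \<in> X \<and> x \<notin> Domain f}"

text \<open>h is a representation by partial functions: an injective homomorphism onto an
  algebra of partial functions (relational composition in diagrammatic order f O g).\<close>
definition representation_pf ::
  "('a \<Rightarrow> 'a \<Rightarrow> 'a) \<Rightarrow> ('a \<Rightarrow> 'a \<Rightarrow> 'a) \<Rightarrow> ('a \<Rightarrow> 'a) \<Rightarrow> ('a \<Rightarrow> ('b \<times> 'b) set) \<Rightarrow> bool" where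
  "representation_pf cmp meet ad h \<longleftrightarrow>
     inj h \<and> (\<forall>a. single_valued (h a)) \<and>
     (\<forall>a b. h (cmp a b) = h a O h b) \<and>
     (\<forall>a b. h (meet a b) = h a \<inter> h b) \<and>
     (\<forall>a. h (ad a) = pf_antidomain (base_of h) (h a))"

definition alg_le :: "('a \<Rightarrow> 'a \<Rightarrow> 'a) \<Rightarrow> 'a \<Rightarrow> 'a \<Rightarrow> bool" where
  "alg_le meet a b \<longleftrightarrow> meet a b = a"

text \<open>The least element is 0 = A(a) o a (for any a); x is nonzero iff x differs from A(x) o x.\<close>
definition alg_zero_elem :: "('a \<Rightarrow> 'a \<Rightarrow> 'a) \<Rightarrow> ('a \<Rightarrow> 'a) \<Rightarrow> 'a \<Rightarrow> bool" where
  "alg_zero_elem cmp ad x \<longleftrightarrow> x = cmp (ad x) x"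

definition alg_atom :: "('a \<Rightarrow> 'a \<Rightarrow> 'a) \<Rightarrow> ('a \<Rightarrow> 'a \<Rightarrow> 'a) \<Rightarrow> ('a \<Rightarrow> 'a) \<Rightarrow> 'a \<Rightarrow> bool" where
  "alg_atom cmp meet ad x \<longleftrightarrow>
     \<not> alg_zero_elem cmp ad x \<and>
     (\<forall>y. alg_le meet y x \<longrightarrow> alg_zero_elem cmp ad y \<or> y = x)"

definition alg_atomic :: "('a \<Rightarrow> 'a \<Rightarrow> 'a) \<Rightarrow> ('a \<Rightarrow> 'a \<Rightarrow> 'a) \<Rightarrow> ('a \<Rightarrow> 'a) \<Rightarrow> bool" where
  "alg_atomic cmp meet ad \<longleftrightarrow>
     (\<forall>a. \<not> alg_zero_elem cmp ad a \<longrightarrow> (\<exists>x. alg_atom cmp meet ad x \<and> alg_le meet x a))"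

definition is_join :: "('a \<Rightarrow> 'a \<Rightarrow> 'a) \<Rightarrow> 'a set \<Rightarrow> 'a \<Rightarrow> bool" where
  "is_join meet S j \<longleftrightarrow> (\<forall>s\<in>S. alg_le meet s j) \<and>
     (\<forall>u. (\<forall>s\<in>S. alg_le meet s u) \<longrightarrow> alg_le meet j u)"

definition compl_left_distr :: "('a \<Rightarrow> 'a \<Rightarrow> 'a) \<Rightarrow> ('a \<Rightarrow> 'a \<Rightarrow> 'a) \<Rightarrow> bool" where
  "compl_left_distr cmp meet \<longleftrightarrow>
     (\<forall>a S j. is_join meet S j \<longrightarrow> is_join meet ((\<lambda>s. cmp a s) ` S) (cmp a j))"

definition phi_sentence :: "('a \<Rightarrow> 'a \<Rightarrow> 'a) \<Rightarrow> ('a \<Rightarrow> 'a \<Rightarrow> 'a) \<Rightarrow> ('a \<Rightarrow> 'a) \<Rightarrow> bool" where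
  "phi_sentence cmp meet ad \<longleftrightarrow>
     (\<forall>a b c. (\<forall>x. alg_atom cmp meet ad x \<and> alg_le meet x b \<longrightarrow> alg_le meet (cmp a x) c)
        \<longrightarrow> alg_le meet (cmp a b) c)"

end

theory Submission
  imports Defs
begin

lemma rep_le:
  assumes "representation_pf cmp meet ad h"
  shows "alg_le meet a b \<longleftrightarrow> h a \<subseteq> h b"
proof -
  have i: "inj h" and m: "h (meet a b) = h a \<inter> h b" using assms unfolding representation_pf_def by auto
  have "meet a b = a \<longleftrightarrow> h (meet a b) = h a" using i by (auto dest: injD)
  thus ?thesis unfolding alg_le_def using m by auto
qed

lemma rep_ad:
  assumes "representation_pf cmp meet ad h"
  shows "h (cmp (ad u) b) = {(p,q). (p,q) \<in> h b \<and> p \<notin> Domain (h u)}"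
proof -
  have c: "h (cmp (ad u) b) = h (ad u) O h b" and a: "h (ad u) = pf_antidomain (base_of h) (h u)"
    using assms unfolding representation_pf_def by auto
  show ?thesis unfolding c a pf_antidomain_def base_of_def by blast
qed

lemma rep_zero:
  assumes "representation_pf cmp meet ad h"
  shows "alg_zero_elem cmp ad x \<longleftrightarrow> h x = {}"
proof -
  have i: "inj h" using assms unfolding representation_pf_def by auto
  have e: "h (cmp (ad x) x) = {}" using rep_ad[OF assms, of x x] by auto
  have "x = cmp (ad x) x \<longleftrightarrow> h x = h (cmp (ad x) x)" using i by (auto dest: injD)
  thus ?thesis unfolding alg_zero_elem_def e by simp
qed

lemma rep_atom:
  assumes "representation_pf cmp meet ad h"
  shows "alg_atom cmp meet ad x \<longleftrightarrow> h x \<noteq> {} \<and> (\<forall>y. h y \<subseteq> h x \<longrightarrow> h y = {} \<or> y = x)"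
  unfolding alg_atom_def rep_le[OF assms] rep_zero[OF assms] by simp

theorem mainTheorem15:
  fixes cmp meet :: "'a \<Rightarrow> 'a \<Rightarrow> 'a" and ad :: "'a \<Rightarrow> 'a"
    and h :: "'a \<Rightarrow> ('b \<times> 'b) set"
  assumes "representation_pf cmp meet ad h"
    and "alg_atomic cmp meet ad"
  shows "compl_left_distr cmp meet \<longleftrightarrow> phi_sentence cmp meet ad"
proof -
  note R = assms(1)
  have sv: "\<And>a. single_valued (h a)" and hc: "\<And>a b. h (cmp a b) = h a O h b"
   and hm: "\<And>a b. h (meet a b) = h a \<inter> h b"
    using R unfolding representation_pf_def by auto
  have at: "\<And>a. h a \<noteq> {} \<Longrightarrow> \<exists>x. alg_atom cmp meet ad x \<and> h x \<subseteq> h a"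
    using assms(2) unfolding alg_atomic_def rep_zero[OF R] rep_le[OF R] by blast
  note L = rep_le[OF R] and AT = rep_atom[OF R] and AD = rep_ad[OF R]
  show ?thesis
  proof
    assume cld: "compl_left_distr cmp meet"
    show "phi_sentence cmp meet ad"
      unfolding phi_sentence_def
    proof (intro allI impI)
      fix a b c
      assume H: "\<forall>x. alg_atom cmp meet ad x \<and> alg_le meet x b \<longrightarrow> alg_le meet (cmp a x) c"
      let ?S = "{x. alg_atom cmp meet ad x \<and> alg_le meet x b}"
      have J: "is_join meet ?S b"
        unfolding is_join_def
      proof (intro conjI allI impI ballI)
        fix u assume U: "\<forall>s\<in>?S. alg_le meet s u"
        let ?y = "cmp (ad (meet b u)) b"
        have hy: "h ?y = {(p,q). (p,q) \<in> h b \<and> p \<notin> Domain (h b \<inter> h u)}"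
          using AD hm by simp
        have "h ?y = {}"
        proof (rule ccontr)
          assume "h ?y \<noteq> {}"
          then obtain x where x: "alg_atom cmp meet ad x" "h x \<subseteq> h ?y" using at by blast
          have "h x \<subseteq> h b" using x(2) hy by auto
          hence "h x \<subseteq> h u" using U x(1) L by auto
          hence "h x \<subseteq> h b \<inter> h u" using \<open>h x \<subseteq> h b\<close> by auto
          moreover have "h x \<noteq> {}" using x(1) AT by auto
          ultimately show False using x(2) hy by fastforce
        qed
        hence "h b \<subseteq> h u"
        proof -
          assume e: "h ?y = {}"
          show ?thesis
          proof
            fix z assume z: "z \<in> h b"
            obtain p q where pq: "z = (p,q)" by force
            have "p \<in> Domain (h b \<inter> h u)" using e hy z pq by blast
            then obtain q' where "(p,q') \<in> h b" "(p,q') \<in> h u" by auto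
            moreover have "q = q'" using sv[of b] z pq \<open>(p,q') \<in> h b\<close>
              unfolding single_valued_def by blast
            ultimately show "z \<in> h u" using pq by simp
          qed
        qed
        thus "alg_le meet b u" using L by simp
      qed auto
      have "is_join meet ((\<lambda>s. cmp a s) ` ?S) (cmp a b)"
        using cld J unfolding compl_left_distr_def by blast
      moreover have "\<forall>s\<in>(\<lambda>s. cmp a s) ` ?S. alg_le meet s c" using H by auto
      ultimately show "alg_le meet (cmp a b) c" unfolding is_join_def by blast
    qed
  next
    assume phi: "phi_sentence cmp meet ad"
    show "compl_left_distr cmp meet"
      unfolding compl_left_distr_def
    proof (intro allI impI)
      fix a S j assume J: "is_join meet S j"
      have sj: "\<And>s. s \<in> S \<Longrightarrow> h s \<subseteq> h j" using J L unfolding is_join_def by blast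
      have jl: "\<And>u. (\<forall>s\<in>S. h s \<subseteq> h u) \<Longrightarrow> h j \<subseteq> h u" using J L unfolding is_join_def by blast
      show "is_join meet ((\<lambda>s. cmp a s) ` S) (cmp a j)"
        unfolding is_join_def
      proof (intro conjI allI impI ballI)
        fix t assume "t \<in> (\<lambda>s. cmp a s) ` S"
        then obtain s where "s \<in> S" "t = cmp a s" by auto
        thus "alg_le meet t (cmp a j)" using sj L hc by (auto simp: relcomp_mono)
      next
        fix u assume U: "\<forall>t\<in>(\<lambda>s. cmp a s) ` S. alg_le meet t u"
        have "\<forall>x. alg_atom cmp meet ad x \<and> alg_le meet x j \<longrightarrow> alg_le meet (cmp a x) u"
        proof (intro allI impI)
          fix x assume xa: "alg_atom cmp meet ad x \<and> alg_le meet x j"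
          hence xj: "h x \<subseteq> h j" and xn: "h x \<noteq> {}" and xat: "\<And>y. h y \<subseteq> h x \<Longrightarrow> h y = {} \<or> y = x"
            using L AT by auto
          have "\<exists>s\<in>S. h x \<inter> h s \<noteq> {}"
          proof (rule ccontr)
            assume "\<not> ?thesis"
            hence D: "\<forall>s\<in>S. h x \<inter> h s = {}" by blast
            let ?j' = "cmp (ad x) j"
            have hj': "h ?j' = {(p,q). (p,q) \<in> h j \<and> p \<notin> Domain (h x)}" using AD by simp
            have "\<forall>s\<in>S. h s \<subseteq> h ?j'"
            proof
              fix s assume s: "s \<in> S"
              show "h s \<subseteq> h ?j'"
              proof
                fix z assume z: "z \<in> h s"
                obtain p q where pq: "z = (p,q)" by force
                have zj: "(p,q) \<in> h j" using sj[OF s] z pq by auto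
                have "p \<notin> Domain (h x)"
                proof
                  assume "p \<in> Domain (h x)"
                  then obtain q' where q': "(p,q') \<in> h x" by auto
                  hence "(p,q') \<in> h j" using xj by auto
                  hence "q = q'" using zj sv[of j] unfolding single_valued_def by blast
                  thus False using q' z pq D s by auto
                qed
                thus "z \<in> h ?j'" using hj' zj pq by auto
              qed
            qed
            hence "h j \<subseteq> h ?j'" using jl by blast
            moreover obtain z where "z \<in> h x" using xn by auto
            ultimately show False using xj hj' by (cases z) auto
          qed
          then obtain s where s: "s \<in> S" "h x \<inter> h s \<noteq> {}" by blast
          have "h (meet x s) \<subseteq> h x" using hm by auto
          moreover have "h (meet x s) \<noteq> {}" using s(2) hm by auto
          ultimately have "meet x s = x" using xat by blast
          hence "h x \<subseteq> h s" using hm by (metis inf.absorb_iff1)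
          hence "h (cmp a x) \<subseteq> h (cmp a s)" using hc by (auto simp: relcomp_mono)
          moreover have "h (cmp a s) \<subseteq> h u" using U s(1) L by auto
          ultimately show "alg_le meet (cmp a x) u" using L by auto
        qed
        thus "alg_le meet (cmp a j) u" using phi unfolding phi_sentence_def by blast
      qed
    qed
  qed
qed

end
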